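(* Let $\varepsilon>0$ be a constant. Asymptotically almost all fully symmetric $n^d\times n^d$ matrices have PT-rank at least $(\tfrac{1}{2^{d+1}}-\varepsilon)n^d$: over a finite field the fraction of fully symmetric $n^d\times n^d$ matrices with smaller PT-rank tends to $0$ as $n\to\infty$, and over an infinite field the fully symmetric matrices of smaller PT-rank lie in a Zariski-closed subset of dimension strictly less than that of the space of fully symmetric matrices (for large $n$).
   Context: Rows and columns of $n^d\times n^d$ matrices are indexed by $[n]^d$. For $k\in[d]$, $M^{\top_k}$ swaps the $k$-th row index with the $k$-th column index: $M^{\top_k}_{(i_1,\dots,i_d),(j_1,\dots,j_d)}=M_{(\dots,i_{k-1},j_k,i_{k+1},\dots),(\dots,j_{k-1},i_k,j_{k+1},\dots)}$; $M^{\top_\kappa}$ composes these over $k\in\kappa\subseteq[d]$. $M$ is fully symmetric if $M^{\top_k}=M$ for all $k\in[d]$. $M$ is PT-basic if $\mathrm{rank}(M^{\top_\kappa})=1$ for some $\kappa$; $\mathrm{PT\text{-}rank}(M)$ is the least number of PT-basic matrices summing to $M$. *)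

theory Defs
  imports Complex_Main
begin

text \<open>Matrices of size n^d x n^d over a field, rows and columns indexed by [n]^d,
  represented as functions on index lists (length d, entries < n), zero outside.\<close>

definition idx :: "nat \<Rightarrow> nat \<Rightarrow> nat list set" where
  "idx n d = {xs. length xs = d \<and> set xs \<subseteq> {..<n}}"

definition swap_idx :: "nat set \<Rightarrow> nat list \<Rightarrow> nat list \<Rightarrow> nat list" where
  "swap_idx \<kappa> i j = map (\<lambda>p. if p \<in> \<kappa> then j ! p else i ! p) [0..<length i]"

definition ptrans :: "nat \<Rightarrow> nat \<Rightarrow> nat set \<Rightarrow> (nat list \<Rightarrow> nat list \<Rightarrow> 'a::zero)
    \<Rightarrow> (nat list \<Rightarrow> nat list \<Rightarrow> 'a)" where
  "ptrans n d \<kappa> M i j =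
     (if i \<in> idx n d \<and> j \<in> idx n d then M (swap_idx \<kappa> i j) (swap_idx \<kappa> j i) else 0)"

definition is_mat :: "nat \<Rightarrow> nat \<Rightarrow> (nat list \<Rightarrow> nat list \<Rightarrow> 'a::zero) \<Rightarrow> bool" where
  "is_mat n d M \<longleftrightarrow> (\<forall>i j. (i \<notin> idx n d \<or> j \<notin> idx n d) \<longrightarrow> M i j = 0)"

definition mat_rank :: "nat list set \<Rightarrow> (nat list \<Rightarrow> nat list \<Rightarrow> 'a::field) \<Rightarrow> nat" where
  "mat_rank I M = (LEAST r. \<exists>u v :: nat \<Rightarrow> nat list \<Rightarrow> 'a.
      \<forall>i\<in>I. \<forall>j\<in>I. M i j = (\<Sum>t<r. u t i * v t j))"

definition fully_symmetric :: "nat \<Rightarrow> nat \<Rightarrow> (nat list \<Rightarrow> nat list \<Rightarrow> 'a::zero) \<Rightarrow> bool" where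
  "fully_symmetric n d M \<longleftrightarrow> is_mat n d M \<and> (\<forall>k<d. ptrans n d {k} M = M)"

definition FS :: "nat \<Rightarrow> nat \<Rightarrow> (nat list \<Rightarrow> nat list \<Rightarrow> 'a::zero) set" where
  "FS n d = {M. fully_symmetric n d M}"

definition PT_basic :: "nat \<Rightarrow> nat \<Rightarrow> (nat list \<Rightarrow> nat list \<Rightarrow> 'a::field) \<Rightarrow> bool" where
  "PT_basic n d M \<longleftrightarrow> (\<exists>\<kappa>\<subseteq>{..<d}. mat_rank (idx n d) (ptrans n d \<kappa> M) = 1)"

definition PT_rank :: "nat \<Rightarrow> nat \<Rightarrow> (nat list \<Rightarrow> nat list \<Rightarrow> 'a::field) \<Rightarrow> nat" where
  "PT_rank n d M = (LEAST r. \<exists>B :: nat \<Rightarrow> nat list \<Rightarrow> nat list \<Rightarrow> 'a.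
      (\<forall>t<r. is_mat n d (B t) \<and> PT_basic n d (B t)) \<and>
      (\<forall>i\<in>idx n d. \<forall>j\<in>idx n d. M i j = (\<Sum>t<r. B t i j)))"

inductive_set poly_fun :: "((nat list \<Rightarrow> nat list \<Rightarrow> 'a::field) \<Rightarrow> 'a) set" where
  pf_const: "(\<lambda>M. c) \<in> poly_fun"
| pf_var: "(\<lambda>M. M i j) \<in> poly_fun"
| pf_add: "p \<in> poly_fun \<Longrightarrow> q \<in> poly_fun \<Longrightarrow> (\<lambda>M. p M + q M) \<in> poly_fun"
| pf_mult: "p \<in> poly_fun \<Longrightarrow> q \<in> poly_fun \<Longrightarrow> (\<lambda>M. p M * q M) \<in> poly_fun"

end

theory Submission
  imports Defs "HOL-Library.Function_Algebras" "HOL-Library.FuncSet" "HOL-Computational_Algebra.Polynomial"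
begin



lemma idx_length: "i \<in> idx n d \<Longrightarrow> length i = d" by (simp add: idx_def)

lemma swap_length[simp]: "length (swap_idx \<kappa> i j) = length i"
  by (simp add: swap_idx_def)

lemma swap_nth[simp]: "p < length i \<Longrightarrow> swap_idx \<kappa> i j ! p = (if p \<in> \<kappa> then j ! p else i ! p)"
  by (simp add: swap_idx_def)

lemma swap_idx_in: "i \<in> idx n d \<Longrightarrow> j \<in> idx n d \<Longrightarrow> swap_idx \<kappa> i j \<in> idx n d"
  unfolding idx_def
  apply (auto simp: in_set_conv_nth)
  by (metis lessThan_iff nth_mem subset_iff)+

lemma swap_invol: "length i = length j \<Longrightarrow>
   swap_idx \<kappa> (swap_idx \<kappa> i j) (swap_idx \<kappa> j i) = i"
  by (rule nth_equalityI) auto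

lemma swap_empty: "swap_idx {} i j = i"
  by (rule nth_equalityI) auto

lemma card_idx: "card (idx n d) = n ^ d"
proof -
  have "idx n d = {xs. set xs \<subseteq> {..<n} \<and> length xs = d}" by (auto simp: idx_def)
  then show ?thesis using card_lists_length_eq[of "{..<n}" d] by simp
qed

lemma finite_idx: "finite (idx n d)"
proof -
  have "idx n d = {xs. set xs \<subseteq> {..<n} \<and> length xs = d}" by (auto simp: idx_def)
  then show ?thesis using finite_lists_length_eq[of "{..<n}" d] by simp
qed

lemma rank_exists:
  fixes M :: "nat list \<Rightarrow> nat list \<Rightarrow> 'a::field"
  assumes "finite I"
  shows "\<exists>(r::nat) u v. \<forall>i\<in>I. \<forall>j\<in>I. M i j = (\<Sum>t<r. u t i * v t j)"
proof -
  obtain h where h: "bij_betw h {0..<card I} I" using ex_bij_betw_nat_finite[OF assms] by blast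
  have "\<forall>i\<in>I. \<forall>j\<in>I. M i j = (\<Sum>t<card I. M i (h t) * (if j = h t then 1 else 0))"
  proof (intro ballI)
    fix i j assume "i \<in> I" "j \<in> I"
    have "(\<Sum>t<card I. M i (h t) * (if j = h t then 1 else 0)) =
          (\<Sum>j'\<in>I. M i j' * (if j = j' then 1 else 0))"
      using sum.reindex_bij_betw[OF h, of "\<lambda>j'. M i j' * (if j = j' then 1 else 0)"]
      by (simp add: lessThan_atLeast0)
    also have "\<dots> = M i j" using \<open>j \<in> I\<close> assms by (simp add: if_distrib cong: if_cong)
    finally show "M i j = (\<Sum>t<card I. M i (h t) * (if j = h t then 1 else 0))" by simp
  qed
  note * = this
  show ?thesis
    apply (rule exI[where x="card I"], rule exI[where x="\<lambda>t i. M i (h t)"], rule exI[where x="\<lambda>t j. if j = h t then 1 else 0"])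
    using * by simp
qed

lemma mat_rank_cong: "(\<And>i j. i \<in> I \<Longrightarrow> j \<in> I \<Longrightarrow> M i j = M' i j) \<Longrightarrow> mat_rank I M = mat_rank I M'"
proof -
  assume a: "\<And>i j. i \<in> I \<Longrightarrow> j \<in> I \<Longrightarrow> M i j = M' i j"
  have "(\<forall>i\<in>I. \<forall>j\<in>I. M i j = (\<Sum>t<r. u t i * v t j)) = (\<forall>i\<in>I. \<forall>j\<in>I. M' i j = (\<Sum>t<r. u t i * v t j))"
    for r and u v :: "nat \<Rightarrow> nat list \<Rightarrow> 'a"
    using a by auto
  then show ?thesis unfolding mat_rank_def by simp
qed


lemma rank1:
  assumes "mat_rank I M = (1::nat)" "finite I"
  shows "\<exists>u v. \<forall>i\<in>I. \<forall>j\<in>I. M i j = u i * v j"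
proof -
  let ?P = "\<lambda>r. \<exists>u v :: nat \<Rightarrow> nat list \<Rightarrow> 'a. \<forall>i\<in>I. \<forall>j\<in>I. M i j = (\<Sum>t<r. u t i * v t j)"
  have "\<exists>r. ?P r" using rank_exists[OF assms(2)] by blast
  then have "?P (Least ?P)" by (rule LeastI_ex)
  then have "?P 1" using assms(1) unfolding mat_rank_def by simp
  then show ?thesis by auto
qed

lemma elem_rank1:
  assumes "i0 \<in> I" "j0 \<in> I" "c \<noteq> 0"
  shows "mat_rank I (\<lambda>i j. if i = i0 \<and> j = j0 then c else 0) = (1::nat)"
  unfolding mat_rank_def
proof (rule Least_equality)
  show "\<exists>u v :: nat \<Rightarrow> nat list \<Rightarrow> 'a. \<forall>i\<in>I. \<forall>j\<in>I. (if i = i0 \<and> j = j0 then c else 0) = (\<Sum>t<1. u t i * v t j)"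
    by (rule exI[of _ "\<lambda>t i. if i = i0 then c else 0"], rule exI[of _ "\<lambda>t j. if j = j0 then 1 else 0"]) auto
next
  fix y assume "\<exists>u v :: nat \<Rightarrow> nat list \<Rightarrow> 'a. \<forall>i\<in>I. \<forall>j\<in>I. (if i = i0 \<and> j = j0 then c else 0) = (\<Sum>t<y. u t i * v t j)"
  then obtain u v :: "nat \<Rightarrow> nat list \<Rightarrow> 'a" where "\<forall>i\<in>I. \<forall>j\<in>I. (if i = i0 \<and> j = j0 then c else 0) = (\<Sum>t<y. u t i * v t j)" by blast
  then have "c = (\<Sum>t<y. u t i0 * v t j0)" using assms by force
  then show "1 \<le> y" using assms(3) by (cases y) auto
qed

lemma ptrans_empty: "i \<in> idx n d \<Longrightarrow> j \<in> idx n d \<Longrightarrow> ptrans n d {} M i j = M i j"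
  by (simp add: ptrans_def swap_empty)

lemma PT_exists:
  fixes M :: "nat list \<Rightarrow> nat list \<Rightarrow> 'a::field"
  shows "\<exists>(r::nat) B. (\<forall>t<r. is_mat n d (B t) \<and> PT_basic n d (B t)) \<and>
      (\<forall>i\<in>idx n d. \<forall>j\<in>idx n d. M i j = (\<Sum>t<r. B t i j))"
proof -
  define Z where "Z = {z \<in> idx n d \<times> idx n d. M (fst z) (snd z) \<noteq> 0}"
  have fZ: "finite Z" unfolding Z_def using finite_idx by (auto intro: finite_subset)
  obtain h where h: "bij_betw h {0..<card Z} Z" using ex_bij_betw_nat_finite[OF fZ] by blast
  define B where "B = (\<lambda>t i j. if (i, j) = h t then M i j else 0)"
  have "is_mat n d (B t) \<and> PT_basic n d (B t)" if "t < card Z" for t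
  proof -
    have hz: "h t \<in> Z" using h that by (auto simp: bij_betw_def)
    obtain i0 j0 where hij: "h t = (i0, j0)" by force
    have z: "i0 \<in> idx n d" "j0 \<in> idx n d" "M i0 j0 \<noteq> 0" using hz hij by (auto simp: Z_def)
    have im: "is_mat n d (B t)" unfolding is_mat_def B_def using z hij by auto
    have eq: "ptrans n d {} (B t) = (\<lambda>i j. if i \<in> idx n d \<and> j \<in> idx n d then B t i j else 0)"
      by (intro ext) (simp add: ptrans_def swap_empty)
    have "mat_rank (idx n d) (ptrans n d {} (B t)) = mat_rank (idx n d) (\<lambda>i j. if i = i0 \<and> j = j0 then M i0 j0 else 0)"
      by (rule mat_rank_cong) (auto simp: ptrans_empty B_def hij)
    also have "\<dots> = 1" by (rule elem_rank1) (use z in auto)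
    finally show ?thesis using im unfolding PT_basic_def by blast
  qed
  moreover have "\<forall>i\<in>idx n d. \<forall>j\<in>idx n d. M i j = (\<Sum>t<card Z. B t i j)"
  proof (intro ballI)
    fix i j assume ij: "i \<in> idx n d" "j \<in> idx n d"
    have "(\<Sum>t<card Z. B t i j) = (\<Sum>z\<in>Z. if (i, j) = z then M i j else 0)"
      using sum.reindex_bij_betw[OF h, of "\<lambda>z. if (i, j) = z then M i j else 0"]
      by (simp add: lessThan_atLeast0 B_def)
    also have "\<dots> = M i j" using fZ ij by (auto simp: Z_def)
    finally show "M i j = (\<Sum>t<card Z. B t i j)" by simp
  qed
  ultimately have "(\<forall>t<card Z. is_mat n d (B t) \<and> PT_basic n d (B t)) \<and>
      (\<forall>i\<in>idx n d. \<forall>j\<in>idx n d. M i j = (\<Sum>t<card Z. B t i j))" by blast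
  note * = this
  show ?thesis
    apply (rule exI[where x="card Z"], rule exI[where x=B]) using * by blast
qed

definition Var :: "nat \<Rightarrow> nat \<Rightarrow> nat \<Rightarrow> (nat \<times> bool \<times> nat list) set" where
  "Var R n d = {..<R} \<times> UNIV \<times> idx n d"

definition Asg :: "nat \<Rightarrow> nat \<Rightarrow> (nat \<Rightarrow> nat set) set" where
  "Asg R d = {..<R} \<rightarrow>\<^sub>E Pow {..<d}"

definition Phi :: "nat \<Rightarrow> (nat \<Rightarrow> nat set) \<Rightarrow> (nat \<times> bool \<times> nat list \<Rightarrow> 'a::field) \<Rightarrow> nat list \<Rightarrow> nat list \<Rightarrow> 'a" where
  "Phi R \<sigma> x i j = (\<Sum>t<R. x (t, True, swap_idx (\<sigma> t) i j) * x (t, False, swap_idx (\<sigma> t) j i))"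

lemma decomp:
  fixes M :: "nat list \<Rightarrow> nat list \<Rightarrow> 'a::field"
  assumes "PT_rank n d M \<le> R"
  shows "\<exists>\<sigma>\<in>Asg R d. \<exists>x\<in>Var R n d \<rightarrow>\<^sub>E UNIV. \<forall>i\<in>idx n d. \<forall>j\<in>idx n d. M i j = Phi R \<sigma> x i j"
proof -
  let ?P = "\<lambda>r. \<exists>B :: nat \<Rightarrow> nat list \<Rightarrow> nat list \<Rightarrow> 'a.
      (\<forall>t<r. is_mat n d (B t) \<and> PT_basic n d (B t)) \<and>
      (\<forall>i\<in>idx n d. \<forall>j\<in>idx n d. M i j = (\<Sum>t<r. B t i j))"
  have "\<exists>r. ?P r" using PT_exists[of n d M] by blast
  then have "?P (Least ?P)" by (rule LeastI_ex)
  then obtain B :: "nat \<Rightarrow> nat list \<Rightarrow> nat list \<Rightarrow> 'a" where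
    B1: "\<forall>t<PT_rank n d M. PT_basic n d (B t)" and
    B2: "\<forall>i\<in>idx n d. \<forall>j\<in>idx n d. M i j = (\<Sum>t<PT_rank n d M. B t i j)"
    unfolding PT_rank_def by blast
  define r where "r = PT_rank n d M"
  have rR: "r \<le> R" using assms r_def by simp
  define Q where "Q = (\<lambda>t (z :: nat set \<times> (nat list \<Rightarrow> 'a) \<times> (nat list \<Rightarrow> 'a)). fst z \<subseteq> {..<d} \<and>
      (\<forall>i\<in>idx n d. \<forall>j\<in>idx n d. ptrans n d (fst z) (B t) i j = fst (snd z) i * snd (snd z) j))"
  have "\<forall>t. \<exists>z. t < r \<longrightarrow> Q t z"
  proof
    fix t
    show "\<exists>z. t < r \<longrightarrow> Q t z"
    proof (cases "t < r")
      case True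
      then obtain \<kappa> where k: "\<kappa> \<subseteq> {..<d}" "mat_rank (idx n d) (ptrans n d \<kappa> (B t)) = 1"
        using B1 r_def unfolding PT_basic_def by blast
      obtain u v where "\<forall>i\<in>idx n d. \<forall>j\<in>idx n d. ptrans n d \<kappa> (B t) i j = u i * v j"
        using rank1[OF k(2) finite_idx] by blast
      then have "Q t (\<kappa>, u, v)" using k unfolding Q_def by simp
      then show ?thesis by blast
    qed simp
  qed
  then obtain Z where Z: "\<And>t. t < r \<Longrightarrow> Q t (Z t)" by metis
  have Bform: "B t i j = fst (snd (Z t)) (swap_idx (fst (Z t)) i j) * snd (snd (Z t)) (swap_idx (fst (Z t)) j i)"
    if "t < r" "i \<in> idx n d" "j \<in> idx n d" for t i j
  proof -
    let ?k = "fst (Z t)"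
    have l: "length i = length j" using that by (simp add: idx_length)
    have "ptrans n d ?k (B t) (swap_idx ?k i j) (swap_idx ?k j i) = B t i j"
      using that l swap_idx_in[of i n d j ?k] swap_idx_in[of j n d i ?k]
      by (simp add: ptrans_def swap_invol)
    then show ?thesis using Z[OF that(1)] swap_idx_in that unfolding Q_def by metis
  qed
  define \<sigma> where "\<sigma> = (\<lambda>t\<in>{..<R}. if t < r then fst (Z t) else {})"
  define x where "x = (\<lambda>v\<in>Var R n d. case v of (t, b, w) \<Rightarrow>
      if t < r then (if b then fst (snd (Z t)) w else snd (snd (Z t)) w) else (0::'a))"
  have "\<sigma> \<in> Asg R d" unfolding Asg_def \<sigma>_def using Z unfolding Q_def by auto
  moreover have "x \<in> Var R n d \<rightarrow>\<^sub>E UNIV" unfolding x_def by auto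
  moreover have "\<forall>i\<in>idx n d. \<forall>j\<in>idx n d. M i j = Phi R \<sigma> x i j"
  proof (intro ballI)
    fix i j assume ij: "i \<in> idx n d" "j \<in> idx n d"
    have "Phi R \<sigma> x i j = (\<Sum>t<R. if t \<in> {..<r} then B t i j else 0)"
      unfolding Phi_def
    proof (rule sum.cong[OF refl])
      fix t assume t: "t \<in> {..<R}"
      show "x (t, True, swap_idx (\<sigma> t) i j) * x (t, False, swap_idx (\<sigma> t) j i) =
            (if t \<in> {..<r} then B t i j else 0)"
        using t ij swap_idx_in[OF ij, of "\<sigma> t"] swap_idx_in[OF ij(2) ij(1), of "\<sigma> t"] Bform[of t i j]
        by (auto simp: x_def \<sigma>_def Var_def)
    qed
    also have "\<dots> = (\<Sum>t<r. B t i j)"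
    proof -
      have "(\<Sum>t<R. if t \<in> {..<r} then B t i j else 0) = sum (\<lambda>t. B t i j) ({..<R} \<inter> {..<r})"
        by (rule sum.inter_restrict[symmetric]) simp
      also have "{..<R} \<inter> {..<r} = {..<r}" using rR by auto
      finally show ?thesis .
    qed
    finally show "M i j = Phi R \<sigma> x i j" using B2 ij r_def by simp
  qed
  ultimately show ?thesis by blast
qed

definition cmin :: "nat list \<Rightarrow> nat list \<Rightarrow> nat list" where
  "cmin i j = map (\<lambda>p. min (i ! p) (j ! p)) [0..<length i]"
definition cmax :: "nat list \<Rightarrow> nat list \<Rightarrow> nat list" where
  "cmax i j = map (\<lambda>p. max (i ! p) (j ! p)) [0..<length i]"

definition Cset :: "nat \<Rightarrow> nat \<Rightarrow> (nat list \<times> nat list) set" where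
  "Cset n d = {(i, j). i \<in> idx n d \<and> j \<in> idx n d \<and> (\<forall>p<d. i ! p \<le> j ! p)}"

definition Emb :: "nat \<Rightarrow> nat \<Rightarrow> (nat list \<times> nat list \<Rightarrow> 'a::zero) \<Rightarrow> nat list \<Rightarrow> nat list \<Rightarrow> 'a" where
  "Emb n d y i j = (if i \<in> idx n d \<and> j \<in> idx n d then y (cmin i j, cmax i j) else 0)"

lemma Emb_FS: "Emb n d y \<in> FS n d"
proof -
  have "ptrans n d {k} (Emb n d y) i j = Emb n d y i j" for k i j
  proof (cases "i \<in> idx n d \<and> j \<in> idx n d")
    case True
    from True have l: "length i = d" "length j = d" by (auto simp: idx_length)
    have "cmin (swap_idx {k} i j) (swap_idx {k} j i) = cmin i j"
      by (rule nth_equalityI) (use l in \<open>auto simp: cmin_def min.commute\<close>)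
    moreover have "cmax (swap_idx {k} i j) (swap_idx {k} j i) = cmax i j"
      by (rule nth_equalityI) (use l in \<open>auto simp: cmax_def max.commute\<close>)
    ultimately show ?thesis using True swap_idx_in[of i n d j "{k}"] swap_idx_in[of j n d i "{k}"]
      by (simp add: ptrans_def Emb_def)
  next
    case False
    then show ?thesis by (auto simp: ptrans_def Emb_def)
  qed
  note pt = this
  have eq: "ptrans n d {k} (Emb n d y) = Emb n d y" for k by (intro ext) (rule pt)
  show ?thesis unfolding FS_def fully_symmetric_def is_mat_def
    by (auto simp: eq) (auto simp: Emb_def)
qed

lemma Emb_C: "(i, j) \<in> Cset n d \<Longrightarrow> Emb n d y i j = y (i, j)"
proof -
  assume a: "(i, j) \<in> Cset n d"
  then have l: "length i = d" "length j = d" "\<forall>p<d. i ! p \<le> j ! p" by (auto simp: Cset_def idx_length)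
  have "cmin i j = i" by (rule nth_equalityI) (use l in \<open>auto simp: cmin_def min_def\<close>)
  moreover have "cmax i j = j" by (rule nth_equalityI) (use l in \<open>auto simp: cmax_def max_def\<close>)
  ultimately show ?thesis using a by (auto simp: Emb_def Cset_def)
qed

lemma Cset_sub: "Cset n d \<subseteq> idx n d \<times> idx n d" by (auto simp: Cset_def)

lemma finite_Cset: "finite (Cset n d)"
  using Cset_sub finite_idx by (metis finite_SigmaI finite_subset)

lemma card_C0: "n * n \<le> 2 * card {(a, b). a \<le> b \<and> b < (n::nat)}"
proof -
  let ?C0 = "{(a, b). a \<le> b \<and> b < (n::nat)}"
  have f: "finite ?C0" by (rule finite_subset[of _ "{..<n} \<times> {..<n}"]) auto
  have "{..<n} \<times> {..<n} \<subseteq> ?C0 \<union> prod.swap ` ?C0"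
  proof
    fix z assume z: "z \<in> {..<n} \<times> {..<n}"
    obtain a b where ab: "z = (a, b)" by force
    show "z \<in> ?C0 \<union> prod.swap ` ?C0"
    proof (cases "a \<le> b")
      case True then show ?thesis using z ab by simp
    next
      case False
      then have "(b, a) \<in> ?C0" using z ab by simp
      then have "prod.swap (b, a) \<in> prod.swap ` ?C0" by (rule imageI)
      then show ?thesis using ab by simp
    qed
  qed
  then have "card ({..<n} \<times> {..<n}) \<le> card (?C0 \<union> prod.swap ` ?C0)"
    using f by (intro card_mono) auto
  also have "\<dots> \<le> card ?C0 + card (prod.swap ` ?C0)" by (rule card_Un_le)
  also have "card (prod.swap ` ?C0) \<le> card ?C0" by (rule card_image_le[OF f])
  finally show ?thesis by (simp add: card_cartesian_product)
qed

lemma card_Cset: "n ^ (2 * d) \<le> 2 ^ d * card (Cset n d)"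
proof -
  let ?C0 = "{(a, b). a \<le> b \<and> b < (n::nat)}"
  have f: "finite ?C0" by (rule finite_subset[of _ "{..<n} \<times> {..<n}"]) auto
  let ?L = "{ps. set ps \<subseteq> ?C0 \<and> length ps = d}"
  let ?g = "\<lambda>ps. (map fst ps, map snd ps)"
  have inj: "inj_on ?g ?L"
  proof (rule inj_onI)
    fix x y assume "?g x = ?g y"
    then have "map fst x = map fst y" "map snd x = map snd y" by simp_all
    then show "x = y" by (metis zip_map_fst_snd)
  qed
  have sub: "?g ` ?L \<subseteq> Cset n d"
  proof
    fix z assume "z \<in> ?g ` ?L"
    then obtain ps where ps: "set ps \<subseteq> ?C0" "length ps = d" "z = ?g ps" by blast
    have e: "\<And>w. w \<in> set ps \<Longrightarrow> fst w \<le> snd w \<and> snd w < n" using ps(1) by auto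
    have "\<forall>p<d. fst (ps ! p) \<le> snd (ps ! p)"
      using ps(2) e nth_mem by blast
    moreover have "set (map fst ps) \<subseteq> {..<n}" "set (map snd ps) \<subseteq> {..<n}"
      using e by fastforce+
    ultimately show "z \<in> Cset n d" using ps(2,3) unfolding Cset_def idx_def
      by simp
  qed
  have "card ?C0 ^ d = card (?g ` ?L)"
    unfolding card_image[OF inj] by (rule card_lists_length_eq[OF f, symmetric])
  also have "\<dots> \<le> card (Cset n d)" by (rule card_mono[OF finite_Cset sub])
  finally have a: "card ?C0 ^ d \<le> card (Cset n d)" .
  have "n ^ (2 * d) = (n * n) ^ d" by (metis power_mult power2_eq_square)
  also have "\<dots> \<le> (2 * card ?C0) ^ d" by (rule power_mono[OF card_C0]) simp
  also have "\<dots> = 2 ^ d * card ?C0 ^ d" by (simp add: power_mult_distrib)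
  also have "\<dots> \<le> 2 ^ d * card (Cset n d)" using a by simp
  finally show ?thesis .
qed

lemma FS_sub: "FS n d \<subseteq> (\<lambda>f i j. if (i, j) \<in> idx n d \<times> idx n d then f (i, j) else 0) ` (idx n d \<times> idx n d \<rightarrow>\<^sub>E UNIV)"
proof
  fix M :: "nat list \<Rightarrow> nat list \<Rightarrow> 'a" assume "M \<in> FS n d"
  then have m: "is_mat n d M" by (simp add: FS_def fully_symmetric_def)
  show "M \<in> (\<lambda>f i j. if (i, j) \<in> idx n d \<times> idx n d then f (i, j) else 0) ` (idx n d \<times> idx n d \<rightarrow>\<^sub>E UNIV)"
    apply (rule image_eqI[where x="\<lambda>z\<in>idx n d \<times> idx n d. M (fst z) (snd z)"])
    using m by (auto simp: is_mat_def intro!: ext)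
qed

lemma finite_FS: "finite (UNIV :: 'a set) \<Longrightarrow> finite (FS n d :: (nat list \<Rightarrow> nat list \<Rightarrow> 'a::zero) set)"
  by (rule finite_subset[OF FS_sub]) (intro finite_imageI finite_PiE, use finite_idx in auto)

lemma card_FS:
  assumes "finite (UNIV :: 'a set)"
  shows "card (UNIV :: 'a set) ^ card (Cset n d) \<le> card (FS n d :: (nat list \<Rightarrow> nat list \<Rightarrow> 'a::zero) set)"
proof -
  have inj: "inj_on (Emb n d :: _ \<Rightarrow> _ \<Rightarrow> _ \<Rightarrow> 'a) (Cset n d \<rightarrow>\<^sub>E UNIV)"
  proof (rule inj_onI)
    fix y y' :: "nat list \<times> nat list \<Rightarrow> 'a"
    assume a: "y \<in> Cset n d \<rightarrow>\<^sub>E UNIV" "y' \<in> Cset n d \<rightarrow>\<^sub>E UNIV" "Emb n d y = Emb n d y'"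
    show "y = y'"
    proof (rule ext)
      fix z show "y z = y' z"
      proof (cases "z \<in> Cset n d")
        case True
        obtain i j where z: "z = (i, j)" by force
        show ?thesis using Emb_C[of i j n d y] Emb_C[of i j n d y'] True a(3) z by simp
      next
        case False then show ?thesis using a by (metis PiE_arb)
      qed
    qed
  qed
  have "card (UNIV :: 'a set) ^ card (Cset n d) = card (Cset n d \<rightarrow>\<^sub>E (UNIV :: 'a set))"
    by (simp add: card_PiE finite_Cset)
  also have "\<dots> = card (Emb n d ` (Cset n d \<rightarrow>\<^sub>E (UNIV :: 'a set)))" by (rule card_image[OF inj, symmetric])
  also have "\<dots> \<le> card (FS n d :: (nat list \<Rightarrow> nat list \<Rightarrow> 'a) set)"
    by (rule card_mono[OF finite_FS[OF assms]]) (auto intro: Emb_FS)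
  finally show ?thesis .
qed

definition Mat :: "nat \<Rightarrow> nat \<Rightarrow> nat \<Rightarrow> (nat \<Rightarrow> nat set) \<Rightarrow> (nat \<times> bool \<times> nat list \<Rightarrow> 'a::field) \<Rightarrow> nat list \<Rightarrow> nat list \<Rightarrow> 'a" where
  "Mat R n d \<sigma> x i j = (if i \<in> idx n d \<and> j \<in> idx n d then Phi R \<sigma> x i j else 0)"

lemma finite_Var: "finite (Var R n d)"
  unfolding Var_def using finite_idx by simp

lemma card_Var: "card (Var R n d) = R * (2 * n ^ d)"
  unfolding Var_def by (simp add: card_cartesian_product card_idx)

lemma card_Asg: "card (Asg R d) = 2 ^ (d * R)"
  unfolding Asg_def by (simp add: card_PiE card_Pow power_mult)

lemma finite_Asg: "finite (Asg R d)"
  unfolding Asg_def by (simp add: finite_PiE)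

lemma Phi_restrict:
  assumes "i \<in> idx n d" "j \<in> idx n d" "\<sigma> \<in> Asg R d"
  shows "Phi R \<sigma> (restrict x (Var R n d)) i j = Phi R \<sigma> x i j"
  unfolding Phi_def
  using swap_idx_in[OF assms(1,2)] swap_idx_in[OF assms(2,1)]
  by (intro sum.cong) (auto simp: Var_def)

lemma count_SR:
  assumes "finite (UNIV :: 'a set)"
  shows "card {M :: nat list \<Rightarrow> nat list \<Rightarrow> 'a::field. M \<in> FS n d \<and> PT_rank n d M \<le> R}
     \<le> 2 ^ (d * R) * card (UNIV :: 'a set) ^ (R * (2 * n ^ d))"
proof -
  let ?S = "{M :: nat list \<Rightarrow> nat list \<Rightarrow> 'a. M \<in> FS n d \<and> PT_rank n d M \<le> R}"
  let ?D = "Asg R d \<times> (Var R n d \<rightarrow>\<^sub>E (UNIV :: 'a set))"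
  have sub: "?S \<subseteq> (\<lambda>(\<sigma>, x). Mat R n d \<sigma> x) ` ?D"
  proof
    fix M assume M: "M \<in> ?S"
    then obtain \<sigma> x where sx: "\<sigma> \<in> Asg R d" "x \<in> Var R n d \<rightarrow>\<^sub>E UNIV"
      "\<forall>i\<in>idx n d. \<forall>j\<in>idx n d. M i j = Phi R \<sigma> x i j"
      using decomp[of n d M R] by blast
    have im: "is_mat n d M" using M by (simp add: FS_def fully_symmetric_def)
    have "M = Mat R n d \<sigma> x"
      using sx(3) im by (intro ext) (auto simp: Mat_def is_mat_def)
    then show "M \<in> (\<lambda>(\<sigma>, x). Mat R n d \<sigma> x) ` ?D" using sx by force
  qed
  have fD: "finite ?D" using finite_Asg finite_Var assms by (simp add: finite_PiE)
  have "card ?S \<le> card ((\<lambda>(\<sigma>, x). Mat R n d \<sigma> x) ` ?D)"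
    by (rule card_mono[OF finite_imageI[OF fD] sub])
  also have "\<dots> \<le> card ?D" by (rule card_image_le[OF fD])
  also have "\<dots> = 2 ^ (d * R) * card (UNIV :: 'a set) ^ (R * (2 * n ^ d))"
    by (simp add: card_cartesian_product card_Asg card_PiE finite_Var card_Var)
  finally show ?thesis .
qed

lemma num_ineq:
  fixes X P Dr Rr e dd nn :: real
  assumes "P \<ge> 1" "P*Dr \<ge> X^2" "Rr < (1/(2*P) - e)*X" "Rr \<ge> 0" "X \<ge> nn" "nn \<ge> 1" "2*e*nn \<ge> dd+1" "e>0" "dd \<ge> 0"
  shows "Dr \<ge> 2*Rr*X + dd*Rr + nn"
proof -
  have X0: "X \<ge> 1" using assms by linarith
  have a: "Dr \<ge> X^2 / P" using assms(1,2) by (simp add: field_simps)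
  have b: "2*Rr*X \<le> X^2/P - 2*e*X^2"
  proof -
    have "2*X*Rr \<le> 2*X*((1/(2*P) - e)*X)" using assms(3) X0 by (intro mult_left_mono) auto
    also have "\<dots> = X^2/P - 2*e*X^2" using assms(1) by (simp add: field_simps power2_eq_square)
    finally show ?thesis by (simp add: mult.commute mult.left_commute)
  qed
  have c0: "Rr \<le> X"
  proof -
    have "1/(2*P) \<le> 1" using assms(1) by simp
    then have "(1/(2*P) - e)*X \<le> 1 * X" using X0 assms(8) by (intro mult_right_mono) auto
    then show ?thesis using assms(3) by simp
  qed
  have c: "dd*Rr \<le> dd*X" using c0 assms(9) by (rule mult_left_mono)
  have d: "2*e*X \<ge> dd + 1"
  proof -
    have "2*e*nn \<le> 2*e*X" using assms(5,8) by simp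
    then show ?thesis using assms(7) by simp
  qed
  have "X*(dd+1) \<le> X*(2*e*X)" using d X0 by (intro mult_left_mono) auto
  then have "dd*X + X \<le> 2*e*X^2" by (simp add: algebra_simps power2_eq_square)
  then show ?thesis using a b c assms(5) by linarith
qed

lemma card_UNIV_ge2: "finite (UNIV :: 'a::field set) \<Longrightarrow> 2 \<le> card (UNIV :: 'a set)"
proof -
  assume f: "finite (UNIV :: 'a set)"
  have "card {0::'a, 1} = 2" by simp
  moreover have "card {0::'a, 1} \<le> card (UNIV :: 'a set)" by (rule card_mono[OF f]) auto
  ultimately show ?thesis by simp
qed

lemma finite_step:
  fixes \<epsilon> :: real
  assumes "\<epsilon> > 0" "d \<ge> 1" "finite (UNIV :: 'a::field set)" "n \<ge> 1" "2 * \<epsilon> * real n \<ge> real d + 1"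
  shows "card {M :: nat list \<Rightarrow> nat list \<Rightarrow> 'a. M \<in> FS n d \<and> real (PT_rank n d M) < (1 / 2 ^ (d + 1) - \<epsilon>) * real n ^ d} * 2 ^ n
     \<le> card (FS n d :: (nat list \<Rightarrow> nat list \<Rightarrow> 'a) set)"
proof -
  define b where "b = (1 / 2 ^ (d + 1) - \<epsilon>) * real n ^ d"
  define Sb where "Sb = {M :: nat list \<Rightarrow> nat list \<Rightarrow> 'a. M \<in> FS n d \<and> real (PT_rank n d M) < b}"
  define q where "q = card (UNIV :: 'a set)"
  have q2: "q \<ge> 2" unfolding q_def by (rule card_UNIV_ge2[OF assms(3)])
  have fFS: "finite (FS n d :: (nat list \<Rightarrow> nat list \<Rightarrow> 'a) set)" by (rule finite_FS[OF assms(3)])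
  have "card Sb * 2 ^ n \<le> card (FS n d :: (nat list \<Rightarrow> nat list \<Rightarrow> 'a) set)"
  proof (cases "Sb = {}")
    case True then show ?thesis by simp
  next
    case False
    then obtain M0 where "M0 \<in> Sb" by blast
    then have "real (PT_rank n d M0) < b" unfolding Sb_def by simp
    then have b0: "b > 0" using of_nat_0_le_iff[of "PT_rank n d M0"] by linarith
    define R where "R = nat (\<lceil>b\<rceil> - 1)"
    have cb: "of_int \<lceil>b\<rceil> - 1 < b" "b \<le> of_int \<lceil>b\<rceil>" using ceiling_correct[of b] by auto
    have cpos: "\<lceil>b\<rceil> \<ge> 1" using b0 by (simp add: one_le_ceiling)
    have hR: "real R < b" unfolding R_def using cb cpos by simp
    have hr: "r \<le> R" if "real r < b" for r
    proof -
      have "real r < of_int \<lceil>b\<rceil>" using that cb by linarith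
      then have "int r < \<lceil>b\<rceil>" by linarith
      then show ?thesis unfolding R_def by linarith
    qed
    have sub: "Sb \<subseteq> {M :: nat list \<Rightarrow> nat list \<Rightarrow> 'a. M \<in> FS n d \<and> PT_rank n d M \<le> R}"
      unfolding Sb_def using hr by auto
    have "card Sb \<le> card {M :: nat list \<Rightarrow> nat list \<Rightarrow> 'a. M \<in> FS n d \<and> PT_rank n d M \<le> R}"
      by (rule card_mono[OF finite_subset[OF _ fFS] sub]) auto
    also have "\<dots> \<le> 2 ^ (d * R) * q ^ (R * (2 * n ^ d))" unfolding q_def by (rule count_SR[OF assms(3)])
    finally have cS: "card Sb \<le> 2 ^ (d * R) * q ^ (R * (2 * n ^ d))" .
    define D where "D = card (Cset n d)"
    have "real D \<ge> 2 * real R * real n ^ d + real d * real R + real n"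
    proof (rule num_ineq[where P="2 ^ d" and e=\<epsilon>])
      show "1 \<le> (2::real) ^ d" by simp
      have "n ^ (2 * d) \<le> 2 ^ d * D" unfolding D_def by (rule card_Cset)
      then have "real (n ^ (2 * d)) \<le> real (2 ^ d * D)" by (simp only: of_nat_le_iff)
      then show "(real n ^ d)\<^sup>2 \<le> 2 ^ d * real D" by (simp add: power_mult[symmetric] mult.commute)
      show "real R < (1 / (2 * 2 ^ d) - \<epsilon>) * real n ^ d" using hR unfolding b_def by simp
      show "real n \<le> real n ^ d" using assms(2,4) by (intro self_le_power) auto
    qed (use assms in auto)
    then have "real (R * (2 * n ^ d) + d * R + n) \<le> real D" by (simp add: algebra_simps)
    then have Dle: "R * (2 * n ^ d) + d * R + n \<le> D" by (simp only: of_nat_le_iff)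
    have "card Sb * 2 ^ n \<le> 2 ^ (d * R) * q ^ (R * (2 * n ^ d)) * 2 ^ n" using cS by simp
    also have "\<dots> = q ^ (R * (2 * n ^ d)) * 2 ^ (d * R + n)" by (simp add: power_add)
    also have "\<dots> \<le> q ^ (R * (2 * n ^ d)) * q ^ (d * R + n)" using q2 by (intro mult_left_mono power_mono) auto
    also have "\<dots> = q ^ (R * (2 * n ^ d) + d * R + n)" by (simp add: power_add)
    also have "\<dots> \<le> q ^ D" using q2 Dle by (intro power_increasing) auto
    also have "\<dots> \<le> card (FS n d :: (nat list \<Rightarrow> nat list \<Rightarrow> 'a) set)" unfolding q_def D_def by (rule card_FS[OF assms(3)])
    finally show ?thesis .
  qed
  then show ?thesis unfolding Sb_def b_def .
qed

lemma finite_part: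
  fixes \<epsilon> :: real
  assumes "\<epsilon> > 0" "d \<ge> 1" "finite (UNIV :: 'a::field set)"
  shows "(\<lambda>n. real (card {M :: nat list \<Rightarrow> nat list \<Rightarrow> 'a. M \<in> FS n d \<and>
                     real (PT_rank n d M) < (1 / 2 ^ (d + 1) - \<epsilon>) * real n ^ d})
                 / real (card (FS n d :: (nat list \<Rightarrow> nat list \<Rightarrow> 'a) set)))
           \<longlonglongrightarrow> 0"
proof (rule tendsto_sandwich[where f="\<lambda>n. 0" and h="\<lambda>n. (1/2::real) ^ n"])
  show "\<forall>\<^sub>F n in sequentially. 0 \<le> real (card {M :: nat list \<Rightarrow> nat list \<Rightarrow> 'a. M \<in> FS n d \<and>
                     real (PT_rank n d M) < (1 / 2 ^ (d + 1) - \<epsilon>) * real n ^ d})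
                 / real (card (FS n d :: (nat list \<Rightarrow> nat list \<Rightarrow> 'a) set))" by simp
  define N where "N = nat \<lceil>(real d + 1) / (2 * \<epsilon>)\<rceil> + 1"
  show "\<forall>\<^sub>F n in sequentially. real (card {M :: nat list \<Rightarrow> nat list \<Rightarrow> 'a. M \<in> FS n d \<and>
                     real (PT_rank n d M) < (1 / 2 ^ (d + 1) - \<epsilon>) * real n ^ d})
                 / real (card (FS n d :: (nat list \<Rightarrow> nat list \<Rightarrow> 'a) set)) \<le> (1/2) ^ n"
  proof (rule eventually_sequentiallyI[of N])
    fix n assume n: "N \<le> n"
    have n1: "n \<ge> 1" using n N_def by simp
    have "real n \<ge> (real d + 1) / (2 * \<epsilon>)" using n unfolding N_def by linarith
    then have e: "2 * \<epsilon> * real n \<ge> real d + 1" using assms(1) by (simp add: field_simps)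
    let ?a = "card {M :: nat list \<Rightarrow> nat list \<Rightarrow> 'a. M \<in> FS n d \<and>
                     real (PT_rank n d M) < (1 / 2 ^ (d + 1) - \<epsilon>) * real n ^ d}"
    let ?c = "card (FS n d :: (nat list \<Rightarrow> nat list \<Rightarrow> 'a) set)"
    have st: "?a * 2 ^ n \<le> ?c" by (rule finite_step[OF assms(1,2,3) n1 e])
    have "1 \<le> card (UNIV :: 'a set) ^ card (Cset n d)"
      using card_UNIV_ge2[OF assms(3)] by (intro one_le_power) simp
    also have "\<dots> \<le> ?c" by (rule card_FS[OF assms(3)])
    finally have "?c \<ge> 1" .
    then have cpos: "real ?c > 0" by simp
    have "real (?a * 2 ^ n) \<le> real ?c" using st by (simp only: of_nat_le_iff)
    then have "real ?a * 2 ^ n \<le> real ?c" by simp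
    then show "real ?a / real ?c \<le> (1/2) ^ n" using cpos by (simp add: field_simps)
  qed
  show "(\<lambda>n. 0::real) \<longlonglongrightarrow> 0" by simp
  show "(\<lambda>n. (1/2::real) ^ n) \<longlonglongrightarrow> 0" by (rule LIMSEQ_power_zero) simp
qed



definition fsc :: "'a::field \<Rightarrow> ('b \<Rightarrow> 'a) \<Rightarrow> 'b \<Rightarrow> 'a" where "fsc c f z = c * f z"

interpretation fv: vector_space "fsc :: 'a::field \<Rightarrow> ('b \<Rightarrow> 'a) \<Rightarrow> 'b \<Rightarrow> 'a"
  by unfold_locales (auto simp: fsc_def fun_eq_iff algebra_simps)

lemma sum_apply_fun: "(sum f A) z = (\<Sum>a\<in>A. f a z)"
  by (induct A rule: infinite_finite_induct) auto

lemma span_mult: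
  fixes f g :: "'b \<Rightarrow> 'a::field"
  assumes "f \<in> fv.span A" "g \<in> fv.span B" "\<And>a b. a \<in> A \<Longrightarrow> b \<in> B \<Longrightarrow> a * b \<in> fv.span C"
  shows "f * g \<in> fv.span C"
proof -
  have inner: "a * g \<in> fv.span C" if a: "a \<in> A" for a
    using assms(2)
  proof (induction rule: fv.span_induct_alt)
    case base show ?case using fv.span_zero[of C] by (simp add: zero_fun_def)
  next
    case (step c x y)
    have eq: "a * (fsc c x + y) = fsc c (a * x) + a * y" by (simp add: fsc_def fun_eq_iff algebra_simps)
    have "fsc c (a * x) + a * y \<in> fv.span C"
      by (intro fv.span_add fv.span_scale assms(3)[OF a step(1)] step(2))
    then show ?case by (simp only: eq)
  qed
  show ?thesis using assms(1)
  proof (induction rule: fv.span_induct_alt)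
    case base show ?case using fv.span_zero[of C] by (simp add: zero_fun_def)
  next
    case (step c x y)
    have eq: "(fsc c x + y) * g = fsc c (x * g) + y * g" by (simp add: fsc_def fun_eq_iff algebra_simps)
    have "fsc c (x * g) + y * g \<in> fv.span C"
      by (intro fv.span_add fv.span_scale inner[OF step(1)] step(2))
    then show ?case by (simp only: eq)
  qed
qed

definition mnm :: "'v set \<Rightarrow> ('v \<Rightarrow> nat) \<Rightarrow> ('s \<times> ('v \<Rightarrow> 'a)) \<Rightarrow> 'a::field" where
  "mnm V \<beta> z = (\<Prod>v\<in>V. snd z v ^ \<beta> v)"

definition Pe :: "'v set \<Rightarrow> nat \<Rightarrow> ('s \<times> ('v \<Rightarrow> 'a::field) \<Rightarrow> 'a) set" where
  "Pe V e = fv.span (mnm V ` (V \<rightarrow>\<^sub>E {..e}))"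

lemma Pe_mono: "a \<le> e \<Longrightarrow> Pe V a \<subseteq> Pe V e"
  unfolding Pe_def
  apply (rule fv.span_mono)
  apply (rule image_mono)
  apply (rule PiE_mono)
  by auto

lemma Pe_mult:
  fixes f g :: "'s \<times> ('v \<Rightarrow> 'a::field) \<Rightarrow> 'a" and V :: "'v set"
  assumes "f \<in> Pe V a" "g \<in> Pe V b"
  shows "f * g \<in> Pe V (a + b)"
  unfolding Pe_def
proof (rule span_mult[OF assms[unfolded Pe_def]])
  fix x y :: "'s \<times> ('v \<Rightarrow> 'a) \<Rightarrow> 'a" assume "x \<in> mnm V ` (V \<rightarrow>\<^sub>E {..a})" "y \<in> mnm V ` (V \<rightarrow>\<^sub>E {..b})"
  then obtain \<beta> \<gamma> where bg: "\<beta> \<in> V \<rightarrow>\<^sub>E {..a}" "\<gamma> \<in> V \<rightarrow>\<^sub>E {..b}" "x = mnm V \<beta>" "y = mnm V \<gamma>" by blast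
  have "x * y = mnm V (restrict (\<lambda>v. \<beta> v + \<gamma> v) V)"
  proof
    fix z :: "'s \<times> ('v \<Rightarrow> 'a)"
    have "(x * y) z = (\<Prod>v\<in>V. snd z v ^ \<beta> v) * (\<Prod>v\<in>V. snd z v ^ \<gamma> v)"
      unfolding bg mnm_def by simp
    also have "\<dots> = (\<Prod>v\<in>V. snd z v ^ \<beta> v * snd z v ^ \<gamma> v)" by (rule prod.distrib[symmetric])
    also have "\<dots> = (\<Prod>v\<in>V. snd z v ^ (restrict (\<lambda>v. \<beta> v + \<gamma> v) V) v)"
      by (rule prod.cong) (simp_all add: power_add)
    finally show "(x * y) z = mnm V (restrict (\<lambda>v. \<beta> v + \<gamma> v) V) z" unfolding mnm_def .
  qed
  moreover have "restrict (\<lambda>v. \<beta> v + \<gamma> v) V \<in> V \<rightarrow>\<^sub>E {..a + b}"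
    using bg(1,2) by (auto simp: PiE_def Pi_def add_mono)
  ultimately have "x * y \<in> mnm V ` (V \<rightarrow>\<^sub>E {..a + b})" by (rule image_eqI)
  then show "x * y \<in> fv.span (mnm V ` (V \<rightarrow>\<^sub>E {..a + b}))" by (rule fv.span_base)
qed

lemma Pe_const:
  fixes V :: "'v set" and c :: "'a::field"
  shows "(\<lambda>z::'s \<times> ('v \<Rightarrow> 'a). c) \<in> Pe V 0"
proof -
  have m: "(mnm V (\<lambda>v\<in>V. 0) :: 's \<times> ('v \<Rightarrow> 'a) \<Rightarrow> 'a) = (\<lambda>z. 1)" by (simp add: mnm_def fun_eq_iff)
  have "(mnm V (\<lambda>v\<in>V. 0::nat) :: 's \<times> ('v \<Rightarrow> 'a) \<Rightarrow> 'a) \<in> mnm V ` (V \<rightarrow>\<^sub>E {..0})" by (rule imageI) auto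
  then have "(mnm V (\<lambda>v\<in>V. 0::nat) :: 's \<times> ('v \<Rightarrow> 'a) \<Rightarrow> 'a) \<in> Pe V 0" unfolding Pe_def by (rule fv.span_base)
  then have "(\<lambda>z::'s \<times> ('v \<Rightarrow> 'a). 1) \<in> Pe V 0" by (simp only: m)
  then have "fsc c (\<lambda>z::'s \<times> ('v \<Rightarrow> 'a). 1) \<in> Pe V 0" unfolding Pe_def by (rule fv.span_scale)
  moreover have "fsc c (\<lambda>z::'s \<times> ('v \<Rightarrow> 'a). 1) = (\<lambda>z. c)" by (simp add: fun_eq_iff fsc_def)
  ultimately show ?thesis by simp
qed

lemma Pe_var:
  fixes V :: "'v set"
  assumes "v \<in> V" "finite V"
  shows "(\<lambda>z::'s \<times> ('v \<Rightarrow> 'a::field). snd z v) \<in> Pe V 1"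
proof -
  have "mnm V (\<lambda>w\<in>V. if w = v then 1 else 0) = (\<lambda>z::'s \<times> ('v \<Rightarrow> 'a). snd z v)"
  proof
    fix z :: "'s \<times> ('v \<Rightarrow> 'a)"
    have "mnm V (\<lambda>w\<in>V. if w = v then 1 else 0) z = (\<Prod>w\<in>V. if w = v then snd z w else 1)"
      unfolding mnm_def by (intro prod.cong) auto
    also have "\<dots> = snd z v" using assms by (simp add: prod.delta)
    finally show "mnm V (\<lambda>w\<in>V. if w = v then 1 else 0) z = snd z v" .
  qed
  moreover have "(mnm V (\<lambda>w\<in>V. if w = v then 1 else 0::nat) :: 's \<times> ('v \<Rightarrow> 'a) \<Rightarrow> 'a) \<in> mnm V ` (V \<rightarrow>\<^sub>E {..1})" by (rule imageI) auto
  ultimately have "(\<lambda>z::'s \<times> ('v \<Rightarrow> 'a). snd z v) \<in> mnm V ` (V \<rightarrow>\<^sub>E {..1})" by (simp only:)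
  then show ?thesis unfolding Pe_def by (rule fv.span_base)
qed

lemma Pe_add: "f \<in> Pe V a \<Longrightarrow> g \<in> Pe V a \<Longrightarrow> (\<lambda>z. f z + g z) \<in> Pe V a"
proof -
  assume "f \<in> Pe V a" "g \<in> Pe V a"
  then have "f + g \<in> Pe V a" unfolding Pe_def by (rule fv.span_add)
  moreover have "f + g = (\<lambda>z. f z + g z)" by (simp add: fun_eq_iff)
  ultimately show ?thesis by simp
qed

lemma Pe_sum: "(\<And>i. i \<in> I \<Longrightarrow> F i \<in> Pe V a) \<Longrightarrow> (\<lambda>z. \<Sum>i\<in>I. F i z) \<in> Pe V a"
proof -
  assume "\<And>i. i \<in> I \<Longrightarrow> F i \<in> Pe V a"
  then have "sum F I \<in> Pe V a" unfolding Pe_def by (rule fv.span_sum)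
  moreover have "sum F I = (\<lambda>z. \<Sum>i\<in>I. F i z)" by (simp add: fun_eq_iff sum_apply_fun)
  ultimately show ?thesis by simp
qed

lemma Pe_times: "f \<in> Pe V a \<Longrightarrow> g \<in> Pe V b \<Longrightarrow> (\<lambda>z. f z * g z) \<in> Pe V (a + b)"
proof -
  assume "f \<in> Pe V a" "g \<in> Pe V b"
  then have "f * g \<in> Pe V (a + b)" by (rule Pe_mult)
  moreover have "f * g = (\<lambda>z. f z * g z)" by (simp add: fun_eq_iff)
  ultimately show ?thesis by simp
qed

lemma Pe_pow: "f \<in> Pe V a \<Longrightarrow> (\<lambda>z. f z ^ j) \<in> Pe V (j * a)"
proof (induction j)
  case 0 then show ?case using Pe_const[where c=1 and V=V] by simp
next
  case (Suc j)
  then show ?case using Pe_times[OF Suc(2) Suc(1)[OF Suc(2)]] by (simp add: add.commute)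
qed

lemma Pe_prod: "finite Q \<Longrightarrow> (\<And>q. q \<in> Q \<Longrightarrow> F q \<in> Pe V a) \<Longrightarrow> (\<lambda>z. \<Prod>q\<in>Q. F q z) \<in> Pe V (card Q * a)"
proof (induction Q rule: finite_induct)
  case empty then show ?case using Pe_const[where c=1 and V=V] by simp
next
  case (insert x F')
  have "(\<lambda>z. F x z * (\<Prod>q\<in>F'. F q z)) \<in> Pe V (a + card F' * a)"
    using insert by (intro Pe_times) auto
  then show ?case using insert by simp
qed

definition Hs :: "'v set \<Rightarrow> nat \<Rightarrow> 's set \<Rightarrow> ('s \<times> ('v \<Rightarrow> 'a::field) \<Rightarrow> 'a) set" where
  "Hs V e S = (\<lambda>(s0, \<beta>). (\<lambda>z. if fst z = s0 then 1 else 0) * mnm V \<beta>) ` (S \<times> (V \<rightarrow>\<^sub>E {..e}))"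

lemma lift:
  fixes f :: "'s \<times> ('v \<Rightarrow> 'a::field) \<Rightarrow> 'a" and V :: "'v set" and S :: "'s set"
  assumes "f \<in> Pe V e" "s0 \<in> S"
  shows "(\<lambda>z. if fst z = s0 then f z else 0) \<in> fv.span (Hs V e S)"
proof -
  have "(\<lambda>z::'s \<times> ('v \<Rightarrow> 'a). if fst z = s0 then 1 else 0) * f \<in> fv.span (Hs V e S)"
  proof (rule span_mult[of _ "{\<lambda>z::'s \<times> ('v \<Rightarrow> 'a). if fst z = s0 then 1 else 0}" _ "mnm V ` (V \<rightarrow>\<^sub>E {..e})"])
    show "(\<lambda>z. if fst z = s0 then 1 else 0) \<in> fv.span {\<lambda>z. if fst z = s0 then 1 else 0}"
      by (rule fv.span_base) simp
    show "f \<in> fv.span (mnm V ` (V \<rightarrow>\<^sub>E {..e}))" using assms(1) by (simp add: Pe_def)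
    fix a b :: "'s \<times> ('v \<Rightarrow> 'a) \<Rightarrow> 'a" assume ab: "a \<in> {\<lambda>z. if fst z = s0 then 1 else 0}" "b \<in> mnm V ` (V \<rightarrow>\<^sub>E {..e})"
    then obtain \<beta> where b: "b = mnm V \<beta>" "\<beta> \<in> V \<rightarrow>\<^sub>E {..e}" by blast
    have "a * b = (\<lambda>(s0, \<beta>). (\<lambda>z. if fst z = s0 then 1 else 0) * mnm V \<beta>) (s0, \<beta>)"
      using ab(1) b(1) by simp
    moreover have "(s0, \<beta>) \<in> S \<times> (V \<rightarrow>\<^sub>E {..e})" using assms(2) b(2) by simp
    ultimately have "a * b \<in> Hs V e S" unfolding Hs_def by (rule image_eqI)
    then show "a * b \<in> fv.span (Hs V e S)" by (rule fv.span_base)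
  qed
  moreover have "(\<lambda>z. if fst z = s0 then 1 else 0) * f = (\<lambda>z. if fst z = s0 then f z else 0)"
    by (simp add: fun_eq_iff)
  ultimately show ?thesis by simp
qed

lemma card_Hs: "finite V \<Longrightarrow> finite S \<Longrightarrow> card (Hs V e S) \<le> card S * (e + 1) ^ card V"
proof -
  assume f: "finite V" "finite S"
  have "card (Hs V e S) \<le> card (S \<times> (V \<rightarrow>\<^sub>E {..e}))" unfolding Hs_def
    by (rule card_image_le) (use f in \<open>simp add: finite_PiE\<close>)
  also have "\<dots> = card S * (e + 1) ^ card V" using f by (simp add: card_cartesian_product card_PiE)
  finally show ?thesis .
qed

lemma finite_Hs: "finite V \<Longrightarrow> finite S \<Longrightarrow> finite (Hs V e S)"
  unfolding Hs_def by (simp add: finite_PiE)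

lemma dep:
  fixes g :: "'i \<Rightarrow> 'b \<Rightarrow> 'a::field"
  assumes "finite T" "finite A" "card T < card A" "\<And>\<alpha>. \<alpha> \<in> A \<Longrightarrow> g \<alpha> \<in> fv.span T"
  shows "\<exists>c. (\<exists>\<alpha>\<in>A. c \<alpha> \<noteq> 0) \<and> (\<forall>z. (\<Sum>\<alpha>\<in>A. c \<alpha> * g \<alpha> z) = 0)"
proof (cases "inj_on g A")
  case False
  then obtain \<alpha> \<beta> where ab: "\<alpha> \<in> A" "\<beta> \<in> A" "\<alpha> \<noteq> \<beta>" "g \<alpha> = g \<beta>" unfolding inj_on_def by blast
  define c where "c = (\<lambda>\<gamma>. if \<gamma> = \<alpha> then 1 else if \<gamma> = \<beta> then -1 else (0::'a))"
  have "(\<Sum>\<gamma>\<in>A. c \<gamma> * g \<gamma> z) = 0" for z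
  proof -
    have "(\<Sum>\<gamma>\<in>A. c \<gamma> * g \<gamma> z) = (\<Sum>\<gamma>\<in>A. (if \<gamma> = \<alpha> then g \<alpha> z else 0) - (if \<gamma> = \<beta> then g \<beta> z else 0))"
      using ab by (intro sum.cong) (auto simp: c_def)
    also have "\<dots> = 0" using ab assms(2) by (simp add: sum_subtractf)
    finally show ?thesis .
  qed
  moreover have "c \<alpha> \<noteq> 0" by (simp add: c_def)
  ultimately show ?thesis using ab(1) by (intro exI[where x=c]) blast
next
  case True
  have "\<not> fv.independent (g ` A)"
  proof
    assume "fv.independent (g ` A)"
    then have "card (g ` A) \<le> card T" using fv.independent_span_bound[OF assms(1)] assms(4) by blast
    then show False using card_image[OF True] assms(3) by simp
  qed
  then obtain S u where Su: "S \<subseteq> g ` A" "finite S" "(\<Sum>v\<in>S. fsc (u v) v) = 0" "\<exists>v\<in>S. u v \<noteq> 0"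
    unfolding fv.independent_explicit_finite_subsets by blast
  define c where "c = (\<lambda>\<alpha>. if g \<alpha> \<in> S then u (g \<alpha>) else 0)"
  have "(\<Sum>\<alpha>\<in>A. c \<alpha> * g \<alpha> z) = 0" for z
  proof -
    let ?A = "{\<alpha> \<in> A. g \<alpha> \<in> S}"
    have "(\<Sum>\<alpha>\<in>A. c \<alpha> * g \<alpha> z) = (\<Sum>\<alpha>\<in>A. if \<alpha> \<in> ?A then u (g \<alpha>) * g \<alpha> z else 0)"
      by (intro sum.cong) (auto simp: c_def)
    also have "\<dots> = (\<Sum>\<alpha>\<in>A \<inter> ?A. u (g \<alpha>) * g \<alpha> z)"
      by (rule sum.inter_restrict[symmetric]) (rule assms(2))
    also have "\<dots> = (\<Sum>\<alpha>\<in>?A. u (g \<alpha>) * g \<alpha> z)" by (rule sum.cong) auto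
    also have "\<dots> = (\<Sum>v\<in>g ` ?A. u v * v z)"
      by (rule sum.reindex[symmetric, unfolded comp_def]) (use True in \<open>auto intro: inj_on_subset\<close>)
    also have "g ` ?A = S" using Su(1) by auto
    also have "(\<Sum>v\<in>S. u v * v z) = (\<Sum>v\<in>S. fsc (u v) v) z" by (simp add: sum_apply_fun fsc_def)
    also have "\<dots> = 0" using Su(3) by simp
    finally show ?thesis .
  qed
  moreover obtain v where v: "v \<in> S" "u v \<noteq> 0" using Su(4) by blast
  obtain \<alpha> where al: "\<alpha> \<in> A" "g \<alpha> = v" using Su(1) v(1) by blast
  have "c \<alpha> \<noteq> 0" using al v by (simp add: c_def)
  ultimately show ?thesis using al(1) by (intro exI[where x=c]) blast
qed



lemma poly_coeffs_zero:
  fixes a :: "nat \<Rightarrow> 'a::field"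
  assumes "infinite (UNIV::'a set)" "\<forall>t. (\<Sum>i\<le>k. a i * t ^ i) = 0" "j \<le> k"
  shows "a j = 0"
proof -
  define p where "p = (\<Sum>i\<le>k. monom (a i) i)"
  have ev: "poly p t = (\<Sum>i\<le>k. a i * t ^ i)" for t by (simp add: p_def poly_sum poly_monom)
  have "p = 0"
  proof (rule ccontr)
    assume "p \<noteq> 0"
    then have "finite {t. poly p t = 0}" by (rule poly_roots_finite)
    moreover have "{t. poly p t = 0} = UNIV" using ev assms(2) by auto
    ultimately show False using assms(1) by simp
  qed
  then have "coeff p j = 0" by simp
  moreover have "coeff p j = a j" using assms(3) by (simp add: p_def coeff_sum coeff_monom)
  ultimately show ?thesis by simp
qed

lemma mono_indep:
  fixes c :: "('v \<Rightarrow> nat) \<Rightarrow> 'a::field" and V :: "'v set"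
  assumes "finite V" "infinite (UNIV :: 'a set)"
   "\<forall>y. (\<Sum>\<alpha>\<in>V \<rightarrow>\<^sub>E {..k}. c \<alpha> * (\<Prod>v\<in>V. y v ^ \<alpha> v)) = 0" "\<alpha> \<in> V \<rightarrow>\<^sub>E {..k}"
  shows "c \<alpha> = 0"
  using assms(1,3,4)
proof (induction V arbitrary: c \<alpha> rule: finite_induct)
  case empty
  then show ?case by simp
next
  case (insert a V)
  have key: "c (\<alpha>'(a := j)) = 0" if al: "\<alpha>' \<in> V \<rightarrow>\<^sub>E {..k}" and j: "j \<le> k" for \<alpha>' j
  proof -
    have split: "(\<Sum>\<alpha>\<in>insert a V \<rightarrow>\<^sub>E {..k}. c \<alpha> * (\<Prod>v\<in>insert a V. y v ^ \<alpha> v)) =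
        (\<Sum>i\<le>k. (\<Sum>\<beta>\<in>V \<rightarrow>\<^sub>E {..k}. c (\<beta>(a := i)) * (\<Prod>v\<in>V. y v ^ \<beta> v)) * y a ^ i)" for y
    proof -
      have "(\<Sum>\<alpha>\<in>insert a V \<rightarrow>\<^sub>E {..k}. c \<alpha> * (\<Prod>v\<in>insert a V. y v ^ \<alpha> v)) =
          (\<Sum>\<alpha>\<in>(\<lambda>(i, g). g(a := i)) ` ({..k} \<times> (V \<rightarrow>\<^sub>E {..k})). c \<alpha> * (\<Prod>v\<in>insert a V. y v ^ \<alpha> v))"
        by (simp add: PiE_insert_eq)
      also have "\<dots> = (\<Sum>(i, \<beta>)\<in>{..k} \<times> (V \<rightarrow>\<^sub>E {..k}). c (\<beta>(a := i)) * (\<Prod>v\<in>insert a V. y v ^ (\<beta>(a := i)) v))"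
        by (subst sum.reindex[OF inj_combinator[OF insert(2)]]) (simp add: case_prod_unfold)
      also have "\<dots> = (\<Sum>(i, \<beta>)\<in>{..k} \<times> (V \<rightarrow>\<^sub>E {..k}). c (\<beta>(a := i)) * (\<Prod>v\<in>V. y v ^ \<beta> v) * y a ^ i)"
      proof (rule sum.cong[OF refl])
        fix x assume "x \<in> {..k} \<times> (V \<rightarrow>\<^sub>E {..k})"
        obtain i \<beta> where x: "x = (i, \<beta>)" by force
        have "(\<Prod>v\<in>insert a V. y v ^ (\<beta>(a := i)) v) = y a ^ i * (\<Prod>v\<in>V. y v ^ (\<beta>(a := i)) v)"
          using insert(1,2) by simp
        also have "(\<Prod>v\<in>V. y v ^ (\<beta>(a := i)) v) = (\<Prod>v\<in>V. y v ^ \<beta> v)"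
          using insert(2) by (intro prod.cong) auto
        finally show "(case x of (i, \<beta>) \<Rightarrow> c (\<beta>(a := i)) * (\<Prod>v\<in>insert a V. y v ^ (\<beta>(a := i)) v)) =
            (case x of (i, \<beta>) \<Rightarrow> c (\<beta>(a := i)) * (\<Prod>v\<in>V. y v ^ \<beta> v) * y a ^ i)"
          unfolding x by (simp add: algebra_simps)
      qed
      also have "\<dots> = (\<Sum>i\<le>k. (\<Sum>\<beta>\<in>V \<rightarrow>\<^sub>E {..k}. c (\<beta>(a := i)) * (\<Prod>v\<in>V. y v ^ \<beta> v) * y a ^ i))"
        by (rule sum.cartesian_product[symmetric])
      also have "\<dots> = (\<Sum>i\<le>k. (\<Sum>\<beta>\<in>V \<rightarrow>\<^sub>E {..k}. c (\<beta>(a := i)) * (\<Prod>v\<in>V. y v ^ \<beta> v)) * y a ^ i)"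
        by (simp add: sum_distrib_right)
      finally show ?thesis .
    qed
    have "\<forall>y0. (\<Sum>\<beta>\<in>V \<rightarrow>\<^sub>E {..k}. c (\<beta>(a := j)) * (\<Prod>v\<in>V. y0 v ^ \<beta> v)) = 0"
    proof
      fix y0 :: "'v \<Rightarrow> 'a"
      have "\<forall>t. (\<Sum>i\<le>k. (\<Sum>\<beta>\<in>V \<rightarrow>\<^sub>E {..k}. c (\<beta>(a := i)) * (\<Prod>v\<in>V. y0 v ^ \<beta> v)) * t ^ i) = 0"
      proof
        fix t
        have pv: "(\<Prod>v\<in>V. (y0(a := t)) v ^ \<beta> v) = (\<Prod>v\<in>V. y0 v ^ \<beta> v)" for \<beta> :: "'v \<Rightarrow> nat"
          using insert(2) by (intro prod.cong) auto
        have "(\<Sum>\<alpha>\<in>insert a V \<rightarrow>\<^sub>E {..k}. c \<alpha> * (\<Prod>v\<in>insert a V. (y0(a := t)) v ^ \<alpha> v)) = 0"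
          using insert(4) by blast
        then show "(\<Sum>i\<le>k. (\<Sum>\<beta>\<in>V \<rightarrow>\<^sub>E {..k}. c (\<beta>(a := i)) * (\<Prod>v\<in>V. y0 v ^ \<beta> v)) * t ^ i) = 0"
          unfolding split pv by simp
      qed
      then show "(\<Sum>\<beta>\<in>V \<rightarrow>\<^sub>E {..k}. c (\<beta>(a := j)) * (\<Prod>v\<in>V. y0 v ^ \<beta> v)) = 0"
        by (rule poly_coeffs_zero[OF assms(2) _ j, where a="\<lambda>i. (\<Sum>\<beta>\<in>V \<rightarrow>\<^sub>E {..k}. c (\<beta>(a := i)) * (\<Prod>v\<in>V. y0 v ^ \<beta> v))", simplified])
    qed
    then show ?thesis using insert.IH[of "\<lambda>\<beta>. c (\<beta>(a := j))" \<alpha>'] al by simp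
  qed
  have "\<alpha> = (\<alpha>(a := undefined))(a := \<alpha> a)" by simp
  moreover have "\<alpha>(a := undefined) \<in> V \<rightarrow>\<^sub>E {..k}" using insert(5) insert(2)
    by (auto simp: PiE_def Pi_def extensional_def)
  moreover have "\<alpha> a \<le> k" using insert(5) by auto
  ultimately show ?case using key by metis
qed


lemma num2_ineq:
  fixes X P Dr Rr e :: real
  assumes "P > 0" "P*Dr \<ge> X^2" "Rr < (1/(2*P) - e)*X" "e > 0" "X > 0"
  shows "2*Rr*X < Dr"
proof -
  have "2*X*Rr < 2*X*((1/(2*P) - e)*X)" using assms(3,5) by (intro mult_strict_left_mono) auto
  also have "\<dots> = X^2/P - 2*e*X^2" using assms(1) by (simp add: field_simps power2_eq_square)
  also have "\<dots> \<le> X^2/P" using assms(4) by simp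
  also have "\<dots> \<le> Dr" using assms(1,2) by (simp add: field_simps)
  finally show ?thesis by (simp add: mult.commute mult.left_commute)
qed

lemma pf_sum: "(\<And>i. i \<in> I \<Longrightarrow> F i \<in> poly_fun) \<Longrightarrow> (\<lambda>M. \<Sum>i\<in>I. F i M) \<in> poly_fun"
proof (induction I rule: infinite_finite_induct)
  case (infinite A) then show ?case using pf_const[of 0] by simp
next
  case empty then show ?case using pf_const[of 0] by simp
next
  case (insert x F')
  have "(\<lambda>M. F x M + (\<Sum>i\<in>F'. F i M)) \<in> poly_fun" using insert by (intro pf_add) auto
  then show ?case using insert by simp
qed

lemma pf_prod: "(\<And>i. i \<in> I \<Longrightarrow> F i \<in> poly_fun) \<Longrightarrow> (\<lambda>M. \<Prod>i\<in>I. F i M) \<in> poly_fun"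
proof (induction I rule: infinite_finite_induct)
  case (infinite A) then show ?case using pf_const[of 1] by simp
next
  case empty then show ?case using pf_const[of 1] by simp
next
  case (insert x F')
  have "(\<lambda>M. F x M * (\<Prod>i\<in>F'. F i M)) \<in> poly_fun" using insert by (intro pf_mult) auto
  then show ?case using insert by simp
qed

lemma pf_pow: "p \<in> poly_fun \<Longrightarrow> (\<lambda>M. p M ^ j) \<in> poly_fun"
proof (induction j)
  case 0 then show ?case using pf_const[of 1] by simp
next
  case (Suc j)
  have "(\<lambda>M. p M * p M ^ j) \<in> poly_fun" using Suc by (intro pf_mult) auto
  then show ?case by simp
qed

lemma Phi_Pe:
  assumes "i \<in> idx n d" "j \<in> idx n d"
  shows "(\<lambda>z::(nat \<Rightarrow> nat set) \<times> (nat \<times> bool \<times> nat list \<Rightarrow> 'a::field). Phi R s0 (snd z) i j) \<in> Pe (Var R n d) 2"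
proof -
  have "(\<lambda>z::(nat \<Rightarrow> nat set) \<times> (nat \<times> bool \<times> nat list \<Rightarrow> 'a). \<Sum>t<R. snd z (t, True, swap_idx (s0 t) i j) * snd z (t, False, swap_idx (s0 t) j i)) \<in> Pe (Var R n d) 2"
  proof (rule Pe_sum)
    fix t assume t: "t \<in> {..<R}"
    have v1: "(t, True, swap_idx (s0 t) i j) \<in> Var R n d" "(t, False, swap_idx (s0 t) j i) \<in> Var R n d"
      using t swap_idx_in[OF assms] swap_idx_in[OF assms(2,1)] by (auto simp: Var_def)
    have "(\<lambda>z::(nat \<Rightarrow> nat set) \<times> (nat \<times> bool \<times> nat list \<Rightarrow> 'a). snd z (t, True, swap_idx (s0 t) i j) * snd z (t, False, swap_idx (s0 t) j i)) \<in> Pe (Var R n d) (1 + 1)"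
      by (intro Pe_times Pe_var v1 finite_Var)
    then show "(\<lambda>z::(nat \<Rightarrow> nat set) \<times> (nat \<times> bool \<times> nat list \<Rightarrow> 'a). snd z (t, True, swap_idx (s0 t) i j) * snd z (t, False, swap_idx (s0 t) j i)) \<in> Pe (Var R n d) 2"
      by (simp only: one_add_one)
  qed
  then show ?thesis unfolding Phi_def .
qed

lemma G_Pe:
  assumes "\<alpha> \<in> Cset n d \<rightarrow>\<^sub>E {..k}"
  shows "(\<lambda>z::(nat \<Rightarrow> nat set) \<times> (nat \<times> bool \<times> nat list \<Rightarrow> 'a::field). \<Prod>q\<in>Cset n d. Phi R s0 (snd z) (fst q) (snd q) ^ \<alpha> q)
     \<in> Pe (Var R n d) (card (Cset n d) * (k * 2))"
proof (rule Pe_prod[OF finite_Cset])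
  fix q assume q: "q \<in> Cset n d"
  have "q \<in> idx n d \<times> idx n d" using q Cset_sub[of n d] by blast
  then have ij: "fst q \<in> idx n d" "snd q \<in> idx n d" by auto
  have "(\<lambda>z::(nat \<Rightarrow> nat set) \<times> (nat \<times> bool \<times> nat list \<Rightarrow> 'a). Phi R s0 (snd z) (fst q) (snd q) ^ \<alpha> q) \<in> Pe (Var R n d) (\<alpha> q * 2)"
    by (rule Pe_pow[OF Phi_Pe[OF ij]])
  moreover have "\<alpha> q * 2 \<le> k * 2" using assms q by auto
  ultimately show "(\<lambda>z::(nat \<Rightarrow> nat set) \<times> (nat \<times> bool \<times> nat list \<Rightarrow> 'a). Phi R s0 (snd z) (fst q) (snd q) ^ \<alpha> q) \<in> Pe (Var R n d) (k * 2)"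
    using Pe_mono by blast
qed

lemma g_span:
  assumes "\<alpha> \<in> Cset n d \<rightarrow>\<^sub>E {..k}"
  shows "(\<lambda>z::(nat \<Rightarrow> nat set) \<times> (nat \<times> bool \<times> nat list \<Rightarrow> 'a::field).
           if fst z \<in> Asg R d then (\<Prod>q\<in>Cset n d. Phi R (fst z) (snd z) (fst q) (snd q) ^ \<alpha> q) else 0)
     \<in> fv.span (Hs (Var R n d) (card (Cset n d) * (k * 2)) (Asg R d))"
proof -
  let ?G = "\<lambda>s0 (z::(nat \<Rightarrow> nat set) \<times> (nat \<times> bool \<times> nat list \<Rightarrow> 'a)). \<Prod>q\<in>Cset n d. Phi R s0 (snd z) (fst q) (snd q) ^ \<alpha> q"
  have "(\<Sum>s0\<in>Asg R d. (\<lambda>z. if fst z = s0 then ?G s0 z else 0)) \<in> fv.span (Hs (Var R n d) (card (Cset n d) * (k * 2)) (Asg R d))"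
    by (intro fv.span_sum lift G_Pe[OF assms])
  moreover have "(\<Sum>s0\<in>Asg R d. (\<lambda>z. if fst z = s0 then ?G s0 z else 0)) =
      (\<lambda>z. if fst z \<in> Asg R d then (\<Prod>q\<in>Cset n d. Phi R (fst z) (snd z) (fst q) (snd q) ^ \<alpha> q) else 0)"
  proof
    fix z :: "(nat \<Rightarrow> nat set) \<times> (nat \<times> bool \<times> nat list \<Rightarrow> 'a)"
    have "(\<Sum>s0\<in>Asg R d. (\<lambda>z. if fst z = s0 then ?G s0 z else 0)) z = (\<Sum>s0\<in>Asg R d. if fst z = s0 then ?G s0 z else 0)"
      by (simp add: sum_apply_fun)
    also have "\<dots> = (if fst z \<in> Asg R d then ?G (fst z) z else 0)"
      using finite_Asg by (simp add: sum.delta)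
    finally show "(\<Sum>s0\<in>Asg R d. (\<lambda>z. if fst z = s0 then ?G s0 z else 0)) z =
      (if fst z \<in> Asg R d then (\<Prod>q\<in>Cset n d. Phi R (fst z) (snd z) (fst q) (snd q) ^ \<alpha> q) else 0)" by simp
  qed
  ultimately show ?thesis by simp
qed

lemma count_ineq:
  fixes T D m :: nat
  assumes "m < D" and that: "card_e = D * (T * (2 * D) ^ m * 2)"
  shows "T * (card_e + 1) ^ m < (T * (2 * D) ^ m + 1) ^ D"
proof -
  define K where "K = T * (2 * D) ^ m + 1"
  have D1: "D \<ge> 1" using assms by simp
  have "card_e + 1 \<le> 2 * D * K" using that D1 unfolding K_def by (simp add: algebra_simps)
  then have "T * (card_e + 1) ^ m \<le> T * (2 * D * K) ^ m" by (intro mult_left_mono power_mono) auto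
  also have "\<dots> = (T * (2 * D) ^ m) * K ^ m" by (simp add: power_mult_distrib)
  also have "\<dots> < K * K ^ m" unfolding K_def by simp
  also have "\<dots> = K ^ (m + 1)" by simp
  also have "\<dots> \<le> K ^ D" using assms K_def by (intro power_increasing) auto
  finally show ?thesis unfolding K_def .
qed

lemma infinite_step:
  fixes \<epsilon> :: real
  assumes "\<epsilon> > 0" "d \<ge> 1" "infinite (UNIV :: 'a::field set)"
  shows "\<exists>p \<in> poly_fun.
              (\<forall>M :: nat list \<Rightarrow> nat list \<Rightarrow> 'a. M \<in> FS n d \<and>
                  real (PT_rank n d M) < (1 / 2 ^ (d + 1) - \<epsilon>) * real n ^ d \<longrightarrow> p M = 0)
              \<and> (\<exists>M \<in> FS n d. p M \<noteq> 0)"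
proof -
  define b where "b = (1 / 2 ^ (d + 1) - \<epsilon>) * real n ^ d"
  have "\<exists>p \<in> poly_fun. (\<forall>M :: nat list \<Rightarrow> nat list \<Rightarrow> 'a. M \<in> FS n d \<and> real (PT_rank n d M) < b \<longrightarrow> p M = 0)
              \<and> (\<exists>M \<in> FS n d. p M \<noteq> 0)"
  proof (cases "\<exists>M :: nat list \<Rightarrow> nat list \<Rightarrow> 'a. M \<in> FS n d \<and> real (PT_rank n d M) < b")
    case False
    have "(\<lambda>M :: nat list \<Rightarrow> nat list \<Rightarrow> 'a. 1::'a) \<in> poly_fun" by (rule pf_const)
    moreover have "Emb n d (\<lambda>_. 0::'a) \<in> FS n d" by (rule Emb_FS)
    ultimately show ?thesis
      apply (intro bexI[where x="\<lambda>M :: nat list \<Rightarrow> nat list \<Rightarrow> 'a. 1::'a"] conjI)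
      using False apply blast
      by auto
  next
    case True
    then obtain M0 :: "nat list \<Rightarrow> nat list \<Rightarrow> 'a" where "real (PT_rank n d M0) < b" by blast
    then have b0: "b > 0" using of_nat_0_le_iff[of "PT_rank n d M0"] by linarith
    define R where "R = nat (\<lceil>b\<rceil> - 1)"
    have cb: "of_int \<lceil>b\<rceil> - 1 < b" "b \<le> of_int \<lceil>b\<rceil>" using ceiling_correct[of b] by auto
    have cpos: "\<lceil>b\<rceil> \<ge> 1" using b0 by (simp add: one_le_ceiling)
    have hR: "real R < b" unfolding R_def using cb cpos by simp
    have hr: "r \<le> R" if "real r < b" for r
    proof -
      have "real r < of_int \<lceil>b\<rceil>" using that cb by linarith
      then have "int r < \<lceil>b\<rceil>" by linarith
      then show ?thesis unfolding R_def by linarith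
    qed
    have n0: "n \<noteq> 0"
    proof
      assume "n = 0"
      then have "b = 0" unfolding b_def using assms(2) by (simp add: zero_power)
      then show False using b0 by simp
    qed
    define D where "D = card (Cset n d)"
    define m where "m = card (Var R n d)"
    have mD: "m < D"
    proof -
      have "2 * real R * real n ^ d < real D"
      proof (rule num2_ineq[where P="2 ^ d" and e=\<epsilon>])
        have "n ^ (2 * d) \<le> 2 ^ d * D" unfolding D_def by (rule card_Cset)
        then have "real (n ^ (2 * d)) \<le> real (2 ^ d * D)" by (simp only: of_nat_le_iff)
        then show "(real n ^ d)\<^sup>2 \<le> 2 ^ d * real D" by (simp add: power_mult[symmetric] mult.commute)
        show "real R < (1 / (2 * 2 ^ d) - \<epsilon>) * real n ^ d" using hR unfolding b_def by simp
      qed (use assms n0 in auto)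
      then have "real m < real D" unfolding m_def card_Var by simp
      then show ?thesis by simp
    qed
    define T where "T = card (Asg R d)"
    define k where "k = T * (2 * D) ^ m"
    define e where "e = D * (k * 2)"
    define A where "A = Cset n d \<rightarrow>\<^sub>E {..k}"
    define H where "H = (Hs (Var R n d) e (Asg R d) :: ((nat \<Rightarrow> nat set) \<times> (nat \<times> bool \<times> nat list \<Rightarrow> 'a) \<Rightarrow> 'a) set)"
    define g where "g = (\<lambda>\<alpha> (z::(nat \<Rightarrow> nat set) \<times> (nat \<times> bool \<times> nat list \<Rightarrow> 'a)).
           if fst z \<in> Asg R d then (\<Prod>q\<in>Cset n d. Phi R (fst z) (snd z) (fst q) (snd q) ^ \<alpha> q) else 0)"
    have fA: "finite A" unfolding A_def by (simp add: finite_PiE finite_Cset)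
    have cA: "card A = (k + 1) ^ D" unfolding A_def D_def by (simp add: card_PiE finite_Cset)
    have fH: "finite H" unfolding H_def by (rule finite_Hs[OF finite_Var finite_Asg])
    have "card H \<le> T * (e + 1) ^ m" unfolding H_def T_def m_def by (rule card_Hs[OF finite_Var finite_Asg])
    also have "\<dots> < (T * (2 * D) ^ m + 1) ^ D" by (rule count_ineq[OF mD]) (simp add: e_def k_def)
    finally have cH: "card H < card A" unfolding cA k_def .
    have gs: "g \<alpha> \<in> fv.span H" if "\<alpha> \<in> A" for \<alpha>
      unfolding g_def H_def e_def D_def using g_span[of \<alpha> n d k R] that A_def by simp
    obtain c where c: "\<exists>\<alpha>\<in>A. c \<alpha> \<noteq> 0" "\<forall>z. (\<Sum>\<alpha>\<in>A. c \<alpha> * g \<alpha> z) = 0"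
      using dep[where g=g, OF fH fA cH gs] by blast
    define p where "p = (\<lambda>M :: nat list \<Rightarrow> nat list \<Rightarrow> 'a. \<Sum>\<alpha>\<in>A. c \<alpha> * (\<Prod>q\<in>Cset n d. M (fst q) (snd q) ^ \<alpha> q))"
    have pf: "p \<in> poly_fun" unfolding p_def
      by (intro pf_sum pf_mult pf_const pf_prod pf_pow pf_var)
    have van: "p M = 0" if M: "M \<in> FS n d" "real (PT_rank n d M) < b" for M
    proof -
      have "PT_rank n d M \<le> R" using hr M(2) by simp
      then obtain \<sigma> x where sx: "\<sigma> \<in> Asg R d" "\<forall>i\<in>idx n d. \<forall>j\<in>idx n d. M i j = Phi R \<sigma> x i j"
        using decomp[of n d M R] by blast
      have eqM: "M (fst q) (snd q) = Phi R \<sigma> x (fst q) (snd q)" if q: "q \<in> Cset n d" for q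
      proof -
        have "q \<in> idx n d \<times> idx n d" using q Cset_sub[of n d] by blast
        then show ?thesis using sx(2) by auto
      qed
      have pr: "(\<Prod>q\<in>Cset n d. M (fst q) (snd q) ^ \<alpha> q) = (\<Prod>q\<in>Cset n d. Phi R \<sigma> x (fst q) (snd q) ^ \<alpha> q)" for \<alpha>
        by (rule prod.cong) (simp_all add: eqM)
      have "p M = (\<Sum>\<alpha>\<in>A. c \<alpha> * g \<alpha> (\<sigma>, x))"
        unfolding p_def g_def using sx(1) by (simp add: pr)
      then show ?thesis using c(2) by simp
    qed
    obtain \<alpha>0 where a0: "\<alpha>0 \<in> A" "c \<alpha>0 \<noteq> 0" using c(1) by blast
    have "\<exists>y. (\<Sum>\<alpha>\<in>A. c \<alpha> * (\<Prod>q\<in>Cset n d. y q ^ \<alpha> q)) \<noteq> 0"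
    proof (rule ccontr)
      assume "\<not> (\<exists>y. (\<Sum>\<alpha>\<in>A. c \<alpha> * (\<Prod>q\<in>Cset n d. y q ^ \<alpha> q)) \<noteq> 0)"
      then have "\<forall>y. (\<Sum>\<alpha>\<in>Cset n d \<rightarrow>\<^sub>E {..k}. c \<alpha> * (\<Prod>q\<in>Cset n d. y q ^ \<alpha> q)) = 0" unfolding A_def by blast
      then have "c \<alpha>0 = 0" using mono_indep[OF finite_Cset assms(3)] a0(1) unfolding A_def by blast
      then show False using a0(2) by simp
    qed
    then obtain y where y: "(\<Sum>\<alpha>\<in>A. c \<alpha> * (\<Prod>q\<in>Cset n d. y q ^ \<alpha> q)) \<noteq> 0" by blast
    have "p (Emb n d y) = (\<Sum>\<alpha>\<in>A. c \<alpha> * (\<Prod>q\<in>Cset n d. y q ^ \<alpha> q))"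
      unfolding p_def by (intro sum.cong refl arg_cong2[where f="(*)"] prod.cong) (auto simp: Emb_C)
    then have "p (Emb n d y) \<noteq> 0" using y by simp
    then show ?thesis
      apply (intro bexI[where x=p] conjI pf)
      using van apply blast
      using Emb_FS[of n d y] by blast
  qed
  then show ?thesis unfolding b_def .
qed

theorem proposition3p18:
  fixes \<epsilon> :: real and d :: nat
  assumes "\<epsilon> > 0" and "d \<ge> 1"
  shows "(finite (UNIV :: 'a::field set) \<longrightarrow>
           (\<lambda>n. real (card {M :: nat list \<Rightarrow> nat list \<Rightarrow> 'a. M \<in> FS n d \<and>
                     real (PT_rank n d M) < (1 / 2 ^ (d + 1) - \<epsilon>) * real n ^ d})
                 / real (card (FS n d :: (nat list \<Rightarrow> nat list \<Rightarrow> 'a) set)))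
           \<longlonglongrightarrow> 0)
       \<and> (infinite (UNIV :: 'a set) \<longrightarrow>
           (\<exists>N. \<forall>n\<ge>N. \<exists>p \<in> poly_fun.
              (\<forall>M :: nat list \<Rightarrow> nat list \<Rightarrow> 'a. M \<in> FS n d \<and>
                  real (PT_rank n d M) < (1 / 2 ^ (d + 1) - \<epsilon>) * real n ^ d \<longrightarrow> p M = 0)
              \<and> (\<exists>M \<in> FS n d. p M \<noteq> 0)))"
proof (intro conjI impI)
  assume "finite (UNIV :: 'a set)"
  then show "(\<lambda>n. real (card {M :: nat list \<Rightarrow> nat list \<Rightarrow> 'a. M \<in> FS n d \<and>
                     real (PT_rank n d M) < (1 / 2 ^ (d + 1) - \<epsilon>) * real n ^ d})
                 / real (card (FS n d :: (nat list \<Rightarrow> nat list \<Rightarrow> 'a) set)))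
           \<longlonglongrightarrow> 0" by (rule finite_part[OF assms])
next
  assume inf: "infinite (UNIV :: 'a set)"
  show "\<exists>N. \<forall>n\<ge>N. \<exists>p \<in> poly_fun.
              (\<forall>M :: nat list \<Rightarrow> nat list \<Rightarrow> 'a. M \<in> FS n d \<and>
                  real (PT_rank n d M) < (1 / 2 ^ (d + 1) - \<epsilon>) * real n ^ d \<longrightarrow> p M = 0)
              \<and> (\<exists>M \<in> FS n d. p M \<noteq> 0)"
    by (intro exI[where x=0] allI impI infinite_step[OF assms inf])
qed

end
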